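(* Let $E$ be a Banach space, $T\colon\ell^1\to E$ a continuous linear operator with $T(e_n)\neq0$ for all $n$, and $p>1$. The following are equivalent: (a) $T$ admits a continuous linear extension $S\colon\ell^p\to E$ (i.e. $T$ is $\frac1p$-th power factorable with a continuous extension); (b) $\ell^p\subset\ell^1(m_T)$; (c) $\ell^1\subset\ell^{1/p}(m_T)\cap\ell^1(m_T)$; (d) there exists $C>0$ such that $\big\|\sum_{j\in F}x_jT(e_j)\big\|_E\le C\big(\sum_{j\in F}x_j^p\big)^{1/p}$ for all finite $F\subset\mathbb N$ and all $(x_j)_{j\in F}\subset[0,\infty)$.
   Context: $e_n=\chi_{\{n\}}$; $\ell^0$ is the space of all real sequences, $\mathcal P_F(\mathbb N)$ the $\delta$-ring of finite subsets of $\mathbb N$ (its local $\sigma$-algebra is $\mathcal P(\mathbb N)$). $m_T\colon\mathcal P_F(\mathbb N)\to E$, $m_T(A)=T(\chi_A)=\sum_{j\in A}T(e_j)$, is a vector measure; since $T(e_n)\ne0$, its only null set is $\emptyset$. For $x^*\in E^*$, $|x^*m_T|$ is the variation measure of $x^*\circ m_T$ on $\mathcal P(\mathbb N)$. $\ell^1(m_T)$ is the set of sequences $x\in\ell^0$ with $x\in L^1(|x^*m_T|)$ for every $x^*\in E^*$ and such that for each $A\subset\mathbb N$ there is $\int_Ax\,dm_T\in E$ with $x^*(\int_Ax\,dm_T)=\int_Ax\,dx^*m_T$ for all $x^*$; it is normed by $\sup_{x^*\in B_{E^*}}\int|x|\,d|x^*m_T|$. For $r\in(0,\infty)$, $\ell^r(m_T)=\{x\in\ell^0:|x|^r\in\ell^1(m_T)\}$.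 *)

theory Defs
  imports "HOL-Analysis.Analysis"
begin

definition unitvec :: "nat \<Rightarrow> nat \<Rightarrow> real" where
  "unitvec n = (\<lambda>k. if k = n then 1 else 0)"

definition ell :: "real \<Rightarrow> (nat \<Rightarrow> real) set" where
  "ell r = {x. summable (\<lambda>n. \<bar>x n\<bar> powr r)}"

definition ell_norm :: "real \<Rightarrow> (nat \<Rightarrow> real) \<Rightarrow> real" where
  "ell_norm r x = (\<Sum>n. \<bar>x n\<bar> powr r) powr (1 / r)"

definition cont_lin_op_on_ell :: "real \<Rightarrow> ((nat \<Rightarrow> real) \<Rightarrow> 'e::real_normed_vector) \<Rightarrow> bool" where
  "cont_lin_op_on_ell r T \<longleftrightarrow>
     (\<forall>x\<in>ell r. \<forall>y\<in>ell r. T (\<lambda>n. x n + y n) = T x + T y) \<and>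
     (\<forall>c. \<forall>x\<in>ell r. T (\<lambda>n. c * x n) = c *\<^sub>R T x) \<and>
     (\<exists>K. \<forall>x\<in>ell r. norm (T x) \<le> K * ell_norm r x)"

text \<open>ell^1(m_T): m_T(A) = sum over j in A of T(e_j); for x^* in E^*, the variation
  measure |x^* m_T| on P(N) is A |-> sum over j in A of |x^*(T e_j)|, and
  the integral of x over A w.r.t. x^* m_T is sum over j in A of x_j x^*(T e_j).\<close>
definition ell1_mT :: "((nat \<Rightarrow> real) \<Rightarrow> 'e::real_normed_vector) \<Rightarrow> (nat \<Rightarrow> real) \<Rightarrow> bool" where
  "ell1_mT T x \<longleftrightarrow>
     (\<forall>f :: 'e \<Rightarrow> real. bounded_linear f \<longrightarrow>
         summable (\<lambda>j. \<bar>x j\<bar> * \<bar>f (T (unitvec j))\<bar>)) \<and>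
     (\<forall>A :: nat set. \<exists>v :: 'e. \<forall>f :: 'e \<Rightarrow> real. bounded_linear f \<longrightarrow>
         f v = (\<Sum>j. if j \<in> A then x j * f (T (unitvec j)) else 0))"

definition ellr_mT :: "real \<Rightarrow> ((nat \<Rightarrow> real) \<Rightarrow> 'e::real_normed_vector) \<Rightarrow> (nat \<Rightarrow> real) \<Rightarrow> bool" where
  "ellr_mT r T x \<longleftrightarrow> ell1_mT T (\<lambda>j. \<bar>x j\<bar> powr r)"

end

theory Submission
  imports Defs
begin


definition sublin :: "('e::real_normed_vector \<Rightarrow> real) \<Rightarrow> bool" where
  "sublin q \<longleftrightarrow> (\<forall>x y. q (x + y) \<le> q x + q y) \<and> (\<forall>t x. t \<ge> 0 \<longrightarrow> q (t *\<^sub>R x) \<le> t * q x)"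

lemma sublin_zero: assumes "sublin q" shows "q 0 = 0"
proof -
  have "q (0 *\<^sub>R 0) \<le> 0 * q 0" using assms unfolding sublin_def by blast
  moreover have "q (0 + 0) \<le> q 0 + q 0" using assms unfolding sublin_def by blast
  ultimately show ?thesis by simp
qed

lemma sublin_hom: assumes "sublin q" "t \<ge> 0" shows "q (t *\<^sub>R x) = t * q x"
proof (cases "t = 0")
  case True then show ?thesis using sublin_zero[OF assms(1)] by simp
next
  case False
  then have tp: "t > 0" using assms by simp
  have h: "\<forall>t x. t \<ge> 0 \<longrightarrow> q (t *\<^sub>R x) \<le> t * q x" using assms(1) unfolding sublin_def by blast
  have "q (inverse t *\<^sub>R (t *\<^sub>R x)) \<le> inverse t * q (t *\<^sub>R x)"
    using h[rule_format, of "inverse t" "t *\<^sub>R x"] tp by simp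
  then have "q x \<le> inverse t * q (t *\<^sub>R x)" using tp by simp
  then have "t * q x \<le> q (t *\<^sub>R x)" using tp by (simp add: field_simps)
  moreover have "q (t *\<^sub>R x) \<le> t * q x" using assms unfolding sublin_def by blast
  ultimately show ?thesis by simp
qed

lemma sublin_add: "sublin q \<Longrightarrow> q (x + y) \<le> q x + q y"
  unfolding sublin_def by blast

lemma sublin_neg: assumes "sublin q" shows "- q (- x) \<le> q x"
proof -
  have "q (x + - x) \<le> q x + q (-x)" by (rule sublin_add[OF assms])
  then show ?thesis using sublin_zero[OF assms] by simp
qed

definition shiftq :: "('e::real_normed_vector \<Rightarrow> real) \<Rightarrow> 'e \<Rightarrow> 'e \<Rightarrow> real" where
  "shiftq q x y = Inf ((\<lambda>t. q (y + t *\<^sub>R x) - t * q x) ` {0..})"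

lemma shiftq_bdd: assumes "sublin q"
  shows "bdd_below ((\<lambda>t. q (y + t *\<^sub>R x) - t * q x) ` {0..})"
proof (rule bdd_belowI2)
  fix t :: real assume "t \<in> {0..}"
  then have t: "t \<ge> 0" by simp
  have "q (t *\<^sub>R x) = q ((y + t *\<^sub>R x) + (- y))" by simp
  also have "\<dots> \<le> q (y + t *\<^sub>R x) + q (- y)" by (rule sublin_add[OF assms])
  finally show "- q (- y) \<le> q (y + t *\<^sub>R x) - t * q x"
    using sublin_hom[OF assms t] by simp
qed

lemma shiftq_le: assumes "sublin q" "t \<ge> 0"
  shows "shiftq q x y \<le> q (y + t *\<^sub>R x) - t * q x"
  unfolding shiftq_def using assms shiftq_bdd[OF assms(1)]
  by (intro cInf_lower) auto

lemma shiftq_ge: assumes "\<And>t. t \<ge> 0 \<Longrightarrow> c \<le> q (y + t *\<^sub>R x) - t * q x"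
  shows "c \<le> shiftq q x y"
  unfolding shiftq_def using assms by (intro cInf_greatest) auto

lemma shiftq_below: assumes "sublin q" shows "shiftq q x y \<le> q y"
  using shiftq_le[OF assms, of 0] by simp

lemma shiftq_neg: assumes "sublin q" shows "shiftq q x (- x) \<le> - q x"
  using shiftq_le[OF assms, of 1 x "-x"] sublin_zero[OF assms] by simp

lemma shiftq_sublin: assumes q: "sublin q" shows "sublin (shiftq q x)"
  unfolding sublin_def
proof (intro conjI allI impI)
  fix y1 y2
  show "shiftq q x (y1 + y2) \<le> shiftq q x y1 + shiftq q x y2"
  proof -
    have "shiftq q x (y1 + y2) - (q (y2 + t2 *\<^sub>R x) - t2 * q x) \<le> shiftq q x y1"
      if t2: "t2 \<ge> 0" for t2
    proof (rule shiftq_ge)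
      fix t1 :: real assume t1: "t1 \<ge> 0"
      have "shiftq q x (y1 + y2) \<le> q (y1 + y2 + (t1 + t2) *\<^sub>R x) - (t1 + t2) * q x"
        using shiftq_le[OF q] t1 t2 by simp
      also have "q (y1 + y2 + (t1 + t2) *\<^sub>R x) = q ((y1 + t1 *\<^sub>R x) + (y2 + t2 *\<^sub>R x))"
        by (simp add: algebra_simps)
      also have "\<dots> \<le> q (y1 + t1 *\<^sub>R x) + q (y2 + t2 *\<^sub>R x)" by (rule sublin_add[OF q])
      finally show "shiftq q x (y1 + y2) - (q (y2 + t2 *\<^sub>R x) - t2 * q x)
          \<le> q (y1 + t1 *\<^sub>R x) - t1 * q x" by (simp add: algebra_simps)
    qed
    then have "shiftq q x (y1 + y2) - shiftq q x y1 \<le> q (y2 + t2 *\<^sub>R x) - t2 * q x"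
      if "t2 \<ge> 0" for t2 using that by force
    then have "shiftq q x (y1 + y2) - shiftq q x y1 \<le> shiftq q x y2"
      by (intro shiftq_ge)
    then show ?thesis by simp
  qed
next
  fix t :: real and y assume t: "t \<ge> 0"
  show "shiftq q x (t *\<^sub>R y) \<le> t * shiftq q x y"
  proof (cases "t = 0")
    case True
    then show ?thesis using shiftq_below[OF q, of x 0] sublin_zero[OF q] by simp
  next
    case False
    then have tp: "t > 0" using t by simp
    have "shiftq q x (t *\<^sub>R y) / t \<le> shiftq q x y"
    proof (rule shiftq_ge)
      fix s :: real assume s: "s \<ge> 0"
      have "shiftq q x (t *\<^sub>R y) \<le> q (t *\<^sub>R y + (t * s) *\<^sub>R x) - (t * s) * q x"
        using shiftq_le[OF q] s tp by simp
      also have "q (t *\<^sub>R y + (t * s) *\<^sub>R x) = q (t *\<^sub>R (y + s *\<^sub>R x))"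
        by (simp add: algebra_simps)
      also have "\<dots> = t * q (y + s *\<^sub>R x)" using sublin_hom[OF q t] by simp
      finally have "shiftq q x (t *\<^sub>R y) \<le> t * (q (y + s *\<^sub>R x) - s * q x)"
        by (simp add: algebra_simps)
      then show "shiftq q x (t *\<^sub>R y) / t \<le> q (y + s *\<^sub>R x) - s * q x"
        using tp by (simp add: field_simps)
    qed
    then show ?thesis using tp by (simp add: field_simps)
  qed
qed

lemma minimal_sublin_linear:
  assumes q: "sublin q" and mini: "\<And>r. sublin r \<Longrightarrow> (\<forall>x. r x \<le> q x) \<Longrightarrow> r = q"
  shows "q (x + y) = q x + q y" "q (c *\<^sub>R x) = c * q x"
proof -
  have neg: "q (- x) = - q x" for x
  proof -
    have "shiftq q x = q" using mini[OF shiftq_sublin[OF q]] shiftq_below[OF q] by blast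
    then have "q (- x) \<le> - q x" using shiftq_neg[OF q, of x] by simp
    moreover have "- q (- x) \<le> q x" by (rule sublin_neg[OF q])
    ultimately show ?thesis by simp
  qed
  have "q x = q ((x + y) + (- y))" by simp
  also have "\<dots> \<le> q (x + y) + q (- y)" by (rule sublin_add[OF q])
  finally show "q (x + y) = q x + q y" using sublin_add[OF q, of x y] neg[of y] by simp
  show "q (c *\<^sub>R x) = c * q x"
  proof (cases "c \<ge> 0")
    case True then show ?thesis by (rule sublin_hom[OF q])
  next
    case False
    have "q (c *\<^sub>R x) = q (- ((- c) *\<^sub>R x))" by simp
    also have "\<dots> = - q ((- c) *\<^sub>R x)" by (rule neg)
    also have "\<dots> = c * q x" using sublin_hom[OF q, of "-c" x] False by simp
    finally show ?thesis .
  qed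
qed

lemma exists_minimal_sublin:
  assumes p0: "sublin p0"
  shows "\<exists>m. sublin m \<and> (\<forall>x. m x \<le> p0 x) \<and>
           (\<forall>r. sublin r \<longrightarrow> (\<forall>x. r x \<le> m x) \<longrightarrow> r = m)"
proof -
  define A where "A = {q. sublin q \<and> (\<forall>x. q x \<le> p0 x)}"
  define P where "P = (\<lambda>(a::'a \<Rightarrow> real) b. \<forall>x. b x \<le> a x)"
  have po: "partial_order_on A (relation_of P A)"
    unfolding partial_order_on_def preorder_on_def refl_on_def trans_def antisym_def
      relation_of_def P_def
    by (auto simp: fun_eq_iff intro: order_trans order.antisym)
  have ch: "\<exists>u\<in>A. \<forall>a\<in>C. P a u" if C: "C \<in> Chains (relation_of P A)" for C
  proof (cases "C = {}")
    case True
    then show ?thesis using p0 unfolding A_def by auto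
  next
    case False
    have CA: "C \<subseteq> A" using C unfolding Chains_def relation_of_def by auto
    have cmp: "\<forall>x. b x \<le> a x \<or> (\<forall>x. a x \<le> b x)" if "a \<in> C" "b \<in> C" for a b
      using C that unfolding Chains_def relation_of_def P_def by auto
    have cmp': "(\<forall>x. b x \<le> a x) \<or> (\<forall>x. a x \<le> b x)" if "a \<in> C" "b \<in> C" for a b
      using C that unfolding Chains_def relation_of_def P_def by auto
    define u where "u x = Inf ((\<lambda>a. a x) ` C)" for x
    have bdd: "bdd_below ((\<lambda>a. a x) ` C)" for x
    proof (rule bdd_belowI2)
      fix a assume "a \<in> C"
      then have "sublin a" "\<forall>x. a x \<le> p0 x" using CA unfolding A_def by auto
      then show "- p0 (- x) \<le> a x" using sublin_neg[of a x] by (smt (verit))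
    qed
    have ule: "u x \<le> a x" if "a \<in> C" for a x
      unfolding u_def using that bdd by (intro cInf_lower) auto
    have uge: "c \<le> u x" if "\<And>a. a \<in> C \<Longrightarrow> c \<le> a x" for c x
      unfolding u_def using that False by (intro cInf_greatest) auto
    have asub: "sublin a" if "a \<in> C" for a using that CA unfolding A_def by auto
    have "sublin u"
      unfolding sublin_def
    proof (intro conjI allI impI)
      fix x y
      have "u (x + y) - a2 y \<le> u x" if a2: "a2 \<in> C" for a2
      proof (rule uge)
        fix a1 assume a1: "a1 \<in> C"
        from cmp'[OF a1 a2] show "u (x + y) - a2 y \<le> a1 x"
        proof
          assume le: "\<forall>x. a2 x \<le> a1 x"
          have "u (x + y) \<le> a2 (x + y)" by (rule ule[OF a2])
          also have "\<dots> \<le> a2 x + a2 y" by (rule sublin_add[OF asub[OF a2]])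
          finally show ?thesis using le[rule_format, of x] by linarith
        next
          assume le: "\<forall>x. a1 x \<le> a2 x"
          have "u (x + y) \<le> a1 (x + y)" by (rule ule[OF a1])
          also have "\<dots> \<le> a1 x + a1 y" by (rule sublin_add[OF asub[OF a1]])
          finally show ?thesis using le[rule_format, of y] by linarith
        qed
      qed
      then have "u (x + y) - u x \<le> a2 y" if "a2 \<in> C" for a2 using that by force
      then have "u (x + y) - u x \<le> u y" by (intro uge)
      then show "u (x + y) \<le> u x + u y" by simp
    next
      fix t :: real and x assume t: "t \<ge> 0"
      show "u (t *\<^sub>R x) \<le> t * u x"
      proof (cases "t = 0")
        case True
        obtain a where a: "a \<in> C" using False by blast
        have "u 0 \<le> a 0" by (rule ule[OF a])
        then show ?thesis using True sublin_zero[OF asub[OF a]] by simp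
      next
        case False
        then have tp: "t > 0" using t by simp
        have "u (t *\<^sub>R x) / t \<le> u x"
        proof (rule uge)
          fix a assume a: "a \<in> C"
          have "u (t *\<^sub>R x) \<le> a (t *\<^sub>R x)" by (rule ule[OF a])
          also have "\<dots> = t * a x" by (rule sublin_hom[OF asub[OF a] t])
          finally show "u (t *\<^sub>R x) / t \<le> a x" using tp by (simp add: field_simps)
        qed
        then show ?thesis using tp by (simp add: field_simps)
      qed
    qed
    moreover have "u x \<le> p0 x" for x
    proof -
      obtain a where a: "a \<in> C" using False by blast
      then have "a x \<le> p0 x" using CA unfolding A_def by blast
      then show ?thesis using ule[OF a, of x] by linarith
    qed
    ultimately have "u \<in> A" unfolding A_def by auto
    moreover have "\<forall>a\<in>C. P a u" unfolding P_def using ule by auto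
    ultimately show ?thesis by blast
  qed
  obtain m where m: "m \<in> A" "\<forall>a\<in>A. P m a \<longrightarrow> a = m"
    using predicate_Zorn[OF po ch] by blast
  show ?thesis
  proof (intro exI conjI allI impI)
    show "sublin m" "m x \<le> p0 x" for x using m(1) unfolding A_def by auto
    fix r assume r: "sublin r" "\<forall>x. r x \<le> m x"
    then have "r \<in> A" using m(1) unfolding A_def by (auto intro: order_trans)
    then show "r = m" using m(2) r(2) unfolding P_def by blast
  qed
qed

lemma hahn_banach_norming:
  fixes u :: "'e::real_normed_vector"
  shows "\<exists>f. bounded_linear f \<and> f u = norm u \<and> (\<forall>w. \<bar>f w\<bar> \<le> norm w)"
proof -
  have nsub: "sublin (norm :: 'e \<Rightarrow> real)"
    unfolding sublin_def by (auto intro: norm_triangle_ineq)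
  define p0 where "p0 = shiftq norm u"
  have p0s: "sublin p0" unfolding p0_def by (rule shiftq_sublin[OF nsub])
  obtain m where m: "sublin m" "\<forall>x. m x \<le> p0 x"
    "\<forall>r. sublin r \<longrightarrow> (\<forall>x. r x \<le> m x) \<longrightarrow> r = m"
    using exists_minimal_sublin[OF p0s] by blast
  have add: "m (x + y) = m x + m y" and sc: "m (c *\<^sub>R x) = c * m x" for x y c
    using minimal_sublin_linear[OF m(1)] m(3) by blast+
  have le: "m w \<le> norm w" for w
    using m(2) shiftq_below[OF nsub, of u w] unfolding p0_def by (meson order_trans)
  have ab: "\<bar>m w\<bar> \<le> norm w" for w
    using le[of w] le[of "-w"] sc[of "-1" w] by auto
  have "m (- u) \<le> - norm u"
    using m(2) shiftq_neg[OF nsub, of u] unfolding p0_def by (meson order_trans)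
  then have "m u \<ge> norm u" using sc[of "-1" u] by simp
  then have mu: "m u = norm u" using le[of u] by simp
  have "bounded_linear m"
    by (rule bounded_linear_intro[where K=1]) (use add sc ab in auto)
  then show ?thesis using mu ab by blast
qed



lemma ubp_vectors:
  fixes u :: "nat \<Rightarrow> 'e::real_normed_vector"
  assumes bnd: "\<And>f :: 'e \<Rightarrow> real. bounded_linear f \<Longrightarrow> \<exists>c. \<forall>k. \<bar>f (u k)\<bar> \<le> c"
  shows "\<exists>M. \<forall>k. norm (u k) \<le> M"
proof -
  define S where "S n = {g :: 'e \<Rightarrow>\<^sub>L real. \<forall>k. \<bar>blinfun_apply g (u k)\<bar> \<le> real n}" for n
  have clo: "closed (S n)" for n
  proof -
    have "S n = (\<Inter>k. {g :: 'e \<Rightarrow>\<^sub>L real. \<bar>blinfun_apply g (u k)\<bar> \<le> real n})"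
      unfolding S_def by auto
    moreover have "closed {g :: 'e \<Rightarrow>\<^sub>L real. \<bar>blinfun_apply g (u k)\<bar> \<le> real n}" for k
      by (intro closed_Collect_le continuous_intros)
    ultimately show ?thesis by auto
  qed
  have cov: "\<Union>(range S) = UNIV"
  proof (rule set_eqI, rule iffI)
    fix g :: "'e \<Rightarrow>\<^sub>L real"
    obtain c where c: "\<forall>k. \<bar>blinfun_apply g (u k)\<bar> \<le> c"
      using bnd[OF blinfun.bounded_linear_right[of g]] by blast
    obtain n :: nat where "c \<le> real n" using real_arch_simple by blast
    then have "\<forall>k. \<bar>blinfun_apply g (u k)\<bar> \<le> real n" using c by (blast intro: order_trans)
    then have "g \<in> S n" unfolding S_def by blast
    then show "g \<in> \<Union>(range S)" by blast
  qed auto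
  have "\<exists>n. euclidean interior_of (S n) \<noteq> {}"
  proof (rule ccontr)
    assume "\<not> ?thesis"
    then have "euclidean interior_of \<Union>(range S) = {}"
    proof (intro Baire_category_alt)
      show "completely_metrizable_space (euclidean :: ('e \<Rightarrow>\<^sub>L real) topology) \<or> locally_compact_space (euclidean :: ('e \<Rightarrow>\<^sub>L real) topology) \<and> regular_space (euclidean :: ('e \<Rightarrow>\<^sub>L real) topology)"
        using completely_metrizable_space_euclidean by blast
      show "countable (range S)" by simp
      fix T assume "T \<in> range S"
      then obtain m where m: "T = S m" by blast
      show "closedin euclidean T \<and> euclidean interior_of T = {}"
        using clo[of m] \<open>\<not> (\<exists>n. euclidean interior_of (S n) \<noteq> {})\<close> m
        unfolding closed_closedin by blast
    qed
    then show False using cov by simp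
  qed
  then obtain n g0 where "g0 \<in> euclidean interior_of (S n)" by blast
  then obtain W where W: "openin euclidean W" "g0 \<in> W" "W \<subseteq> S n"
    unfolding interior_of_def by blast
  then obtain r where r: "r > 0" "ball g0 r \<subseteq> W"
    using open_contains_ball open_openin by metis
  have "norm (u k) \<le> 4 * real n / r" for k
  proof -
    obtain h where h: "bounded_linear h" "h (u k) = norm (u k)" "\<forall>w. \<bar>h w\<bar> \<le> norm w"
      using hahn_banach_norming by blast
    define g where "g = Blinfun h"
    have ga: "blinfun_apply g = h" unfolding g_def using h(1) by (rule bounded_linear_Blinfun_apply)
    have "norm g \<le> 1" by (rule norm_blinfun_bound) (use h(3) ga in auto)
    define g1 where "g1 = g0 + (r/2) *\<^sub>R g"
    have "dist g0 g1 = (r/2) * norm g" unfolding g1_def dist_norm using r(1) by simp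
    also have "\<dots> \<le> r/2" using \<open>norm g \<le> 1\<close> r(1) by (simp add: mult_left_le)
    also have "\<dots> < r" using r(1) by simp
    finally have "g1 \<in> ball g0 r" by simp
    then have "g1 \<in> S n" using r(2) W(3) by blast
    then have 1: "\<bar>blinfun_apply g1 (u k)\<bar> \<le> real n" unfolding S_def by blast
    have "g0 \<in> S n" using W by blast
    then have 2: "\<bar>blinfun_apply g0 (u k)\<bar> \<le> real n" unfolding S_def by blast
    have "blinfun_apply g1 (u k) = blinfun_apply g0 (u k) + (r/2) * norm (u k)"
      unfolding g1_def using ga h(2) by (simp add: blinfun.add_left blinfun.scaleR_left)
    then have "(r/2) * norm (u k) \<le> 2 * real n" using 1 2 by linarith
    then show ?thesis using r(1) by (simp add: field_simps)
  qed
  then show ?thesis by blast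
qed



lemma unitvec_abs_powr: "r > 0 \<Longrightarrow> \<bar>unitvec n j\<bar> powr r = unitvec n j"
  by (simp add: unitvec_def)

lemma unitvec_ell: assumes "r > 0" shows "unitvec n \<in> ell r" and "ell_norm r (unitvec n) = 1"
proof -
  have s: "(\<lambda>j. \<bar>unitvec n j\<bar> powr r) sums 1"
    using sums_finite[of "{n}" "\<lambda>j. \<bar>unitvec n j\<bar> powr r"] assms
    by (simp add: unitvec_abs_powr) (simp add: unitvec_def)
  then show "unitvec n \<in> ell r" unfolding ell_def by (auto simp: sums_summable)
  show "ell_norm r (unitvec n) = 1" unfolding ell_norm_def using sums_unique[OF s] by simp
qed

lemma ell_dom: assumes "y \<in> ell r" "r > 0" "\<And>j. \<bar>z j\<bar> \<le> \<bar>y j\<bar>"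
  shows "z \<in> ell r" "(\<Sum>j. \<bar>z j\<bar> powr r) \<le> (\<Sum>j. \<bar>y j\<bar> powr r)"
proof -
  have le: "\<bar>z j\<bar> powr r \<le> \<bar>y j\<bar> powr r" for j using assms by (intro powr_mono2) auto
  have sy: "summable (\<lambda>j. \<bar>y j\<bar> powr r)" using assms(1) unfolding ell_def by simp
  have sz: "summable (\<lambda>j. \<bar>z j\<bar> powr r)"
    by (rule summable_comparison_test[OF _ sy]) (use le in auto)
  then show "z \<in> ell r" unfolding ell_def by simp
  show "(\<Sum>j. \<bar>z j\<bar> powr r) \<le> (\<Sum>j. \<bar>y j\<bar> powr r)"
    by (rule suminf_le[OF le sz sy])
qed

lemma finsupp_ell: assumes "finite F" "\<And>j. j \<notin> F \<Longrightarrow> z j = 0" "r > 0"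
  shows "z \<in> ell r"
proof -
  have "(\<lambda>j. \<bar>z j\<bar> powr r) sums (\<Sum>j\<in>F. \<bar>z j\<bar> powr r)"
    by (rule sums_finite) (use assms in auto)
  then show ?thesis unfolding ell_def by (auto simp: sums_summable)
qed

lemma sum_unitvec: "finite F \<Longrightarrow> (\<Sum>i\<in>F. c i * unitvec i j) = (if j \<in> F then c j else 0)"
proof -
  have "(\<Sum>i\<in>F. c i * unitvec i j) = (\<Sum>i\<in>F. if j = i then c i else 0)"
    by (rule sum.cong) (auto simp: unitvec_def)
  moreover assume "finite F"
  ultimately show ?thesis by simp
qed

lemma op_add: "cont_lin_op_on_ell r R \<Longrightarrow> x \<in> ell r \<Longrightarrow> y \<in> ell r \<Longrightarrow> R (\<lambda>n. x n + y n) = R x + R y"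
  unfolding cont_lin_op_on_ell_def by blast

lemma op_scale: "cont_lin_op_on_ell r R \<Longrightarrow> x \<in> ell r \<Longrightarrow> R (\<lambda>n. c * x n) = c *\<^sub>R R x"
  unfolding cont_lin_op_on_ell_def by blast

lemma op_zero: assumes "cont_lin_op_on_ell r R" "r > 0" shows "R (\<lambda>j. 0) = 0"
proof -
  have "R (\<lambda>j. 0 * unitvec 0 j) = 0 *\<^sub>R R (unitvec 0)"
    using assms unitvec_ell(1)[OF assms(2)] unfolding cont_lin_op_on_ell_def by blast
  then show ?thesis by simp
qed

lemma op_finite:
  assumes R: "cont_lin_op_on_ell r R" and r: "r > 0" and F: "finite F"
  shows "R (\<lambda>j. \<Sum>i\<in>F. c i * unitvec i j) = (\<Sum>i\<in>F. c i *\<^sub>R R (unitvec i))"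
  using F
proof (induction F rule: finite_induct)
  case empty
  then show ?case using op_zero[OF R r] by simp
next
  case (insert i F)
  have m1: "(\<lambda>j. c i * unitvec i j) \<in> ell r"
    by (rule finsupp_ell[of "{i}"]) (use r in \<open>auto simp: unitvec_def\<close>)
  have m2: "(\<lambda>j. \<Sum>i\<in>F. c i * unitvec i j) \<in> ell r"
    by (rule finsupp_ell[of F]) (use r insert in \<open>auto simp: sum_unitvec\<close>)
  have add: "R (\<lambda>j. c i * unitvec i j + (\<Sum>i\<in>F. c i * unitvec i j))
      = R (\<lambda>j. c i * unitvec i j) + R (\<lambda>j. \<Sum>i\<in>F. c i * unitvec i j)"
    using op_add[OF R m1 m2] by simp
  have sc: "R (\<lambda>j. c i * unitvec i j) = c i *\<^sub>R R (unitvec i)"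
    using R unitvec_ell(1)[OF r] unfolding cont_lin_op_on_ell_def by blast
  show ?case using insert add sc by simp
qed

lemma trunc_eq: "(\<lambda>j. if j < n then y j else 0) = (\<lambda>j. \<Sum>i<n. y i * unitvec i j)"
  by (rule ext) (simp add: sum_unitvec)

lemma tail_norm_tendsto:
  assumes "y \<in> ell r" "r > 0"
  shows "(\<lambda>n. ell_norm r (\<lambda>j. if j < n then 0 else y j)) \<longlonglongrightarrow> 0"
proof -
  define g where "g j = \<bar>y j\<bar> powr r" for j
  have sg: "summable g" using assms unfolding ell_def g_def by simp
  have eq: "(\<Sum>j. \<bar>if j < n then 0 else y j\<bar> powr r) = suminf g - (\<Sum>j<n. g j)" for n
  proof -
    have "(\<lambda>j. \<bar>if j < n then 0 else y j\<bar> powr r) = (\<lambda>j. g j - (if j \<in> {..<n} then g j else 0))"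
      by (auto simp: g_def)
    moreover have "(\<lambda>j. g j - (if j \<in> {..<n} then g j else 0)) sums (suminf g - (\<Sum>j<n. g j))"
      by (intro sums_diff summable_sums sg sums_If_finite_set) simp
    ultimately show ?thesis by (simp add: sums_unique[symmetric])
  qed
  have t: "(\<lambda>n. suminf g - (\<Sum>j<n. g j)) \<longlonglongrightarrow> 0"
    using tendsto_diff[OF tendsto_const summable_LIMSEQ[OF sg], of "suminf g"] by simp
  have nn: "suminf g - (\<Sum>j<n. g j) \<ge> 0" for n
    using sum_le_suminf[OF sg, of "{..<n}"] by (auto simp: g_def)
  have "(\<lambda>n. (suminf g - (\<Sum>j<n. g j)) powr (1 / r)) \<longlonglongrightarrow> 0"
    by (rule tendsto_zero_powrI[OF t tendsto_const]) (use nn assms(2) in auto)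
  then show ?thesis unfolding ell_norm_def eq .
qed

lemma sums_op:
  assumes R: "cont_lin_op_on_ell r R" and r: "r > 0" and y: "y \<in> ell r"
  shows "(\<lambda>j. y j *\<^sub>R R (unitvec j)) sums R y"
proof -
  obtain K where K: "\<forall>x\<in>ell r. norm (R x) \<le> K * ell_norm r x"
    using R unfolding cont_lin_op_on_ell_def by blast
  define tr where "tr n = (\<lambda>j. if j < n then y j else 0)" for n
  define tl where "tl n = (\<lambda>j. if j < n then 0 else y j)" for n
  have trm: "tr n \<in> ell r" for n by (rule ell_dom[OF y r]) (auto simp: tr_def)
  have tlm: "tl n \<in> ell r" for n by (rule ell_dom[OF y r]) (auto simp: tl_def)
  have "y = (\<lambda>j. tr n j + tl n j)" for n by (auto simp: tr_def tl_def)
  then have split: "R y = R (tr n) + R (tl n)" for n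
    using op_add[OF R trm tlm] by metis
  have trR: "R (tr n) = (\<Sum>i<n. y i *\<^sub>R R (unitvec i))" for n
    unfolding tr_def trunc_eq by (rule op_finite[OF R r]) simp
  have bnd: "norm ((\<Sum>i<n. y i *\<^sub>R R (unitvec i)) - R y) \<le> K * ell_norm r (tl n)" for n
  proof -
    have "(\<Sum>i<n. y i *\<^sub>R R (unitvec i)) - R y = - R (tl n)" using split[of n] trR[of n] by simp
    then show ?thesis using K tlm[of n] by simp
  qed
  have "(\<lambda>n. K * ell_norm r (tl n)) \<longlonglongrightarrow> 0"
    using tendsto_mult_right_zero[OF tail_norm_tendsto[OF y r]] unfolding tl_def .
  then have "(\<lambda>n. (\<Sum>i<n. y i *\<^sub>R R (unitvec i)) - R y) \<longlonglongrightarrow> 0"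
    by (rule Lim_null_comparison[rotated]) (use bnd in auto)
  then show ?thesis unfolding sums_def by (rule LIM_zero_cancel)
qed

lemma ell1_sub_ellp: assumes "p \<ge> 1" "x \<in> ell 1" shows "x \<in> ell p"
proof -
  have s: "summable (\<lambda>j. \<bar>x j\<bar>)" using assms(2) unfolding ell_def by simp
  then have "(\<lambda>j. \<bar>x j\<bar>) \<longlonglongrightarrow> 0" by (rule summable_LIMSEQ_zero)
  then have ev: "\<forall>\<^sub>F j in sequentially. \<bar>x j\<bar> < 1"
    by (rule order_tendstoD) simp
  have "\<forall>\<^sub>F j in sequentially. norm (\<bar>x j\<bar> powr p) \<le> \<bar>x j\<bar>"
  proof (rule eventually_mono[OF ev])
    fix j assume "\<bar>x j\<bar> < 1"
    then have "\<bar>x j\<bar> powr p \<le> \<bar>x j\<bar> powr 1" using assms(1) by (intro powr_mono') auto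
    then show "norm (\<bar>x j\<bar> powr p) \<le> \<bar>x j\<bar>" by simp
  qed
  then have "summable (\<lambda>j. \<bar>x j\<bar> powr p)" by (rule summable_comparison_test_ev) (rule s)
  then show ?thesis unfolding ell_def by simp
qed



lemma d_two_sided:
  fixes T :: "(nat \<Rightarrow> real) \<Rightarrow> 'e::real_normed_vector"
  assumes C: "C > 0" and p: "p > 1"
    and d: "\<forall>F x. finite F \<longrightarrow> (\<forall>j\<in>F. x j \<ge> 0) \<longrightarrow>
                  norm (\<Sum>j\<in>F. x j *\<^sub>R T (unitvec j)) \<le> C * (\<Sum>j\<in>F. x j powr p) powr (1 / p)"
    and F: "finite F"
  shows "norm (\<Sum>j\<in>F. c j *\<^sub>R T (unitvec j)) \<le> 2 * C * (\<Sum>j\<in>F. \<bar>c j\<bar> powr p) powr (1 / p)"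
proof -
  define F1 where "F1 = {j\<in>F. c j \<ge> 0}"
  define F2 where "F2 = {j\<in>F. c j < 0}"
  have f12: "finite F1" "finite F2" using F unfolding F1_def F2_def by auto
  have un: "F = F1 \<union> F2" "F1 \<inter> F2 = {}" unfolding F1_def F2_def by auto
  define s where "s = (\<Sum>j\<in>F. \<bar>c j\<bar> powr p) powr (1 / p)"
  have mono: "(\<Sum>j\<in>G. \<bar>c j\<bar> powr p) powr (1 / p) \<le> s" if "G \<subseteq> F" for G
    unfolding s_def using p that F by (intro powr_mono2 sum_mono2) (auto intro: sum_nonneg)
  have "norm (\<Sum>j\<in>F1. c j *\<^sub>R T (unitvec j)) \<le> C * (\<Sum>j\<in>F1. c j powr p) powr (1 / p)"
    using d f12 unfolding F1_def by auto
  also have "(\<Sum>j\<in>F1. c j powr p) = (\<Sum>j\<in>F1. \<bar>c j\<bar> powr p)"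
    by (rule sum.cong) (auto simp: F1_def)
  finally have n1: "norm (\<Sum>j\<in>F1. c j *\<^sub>R T (unitvec j)) \<le> C * s"
    using mono[of F1] C un by (smt (verit, best) Un_upper1 mult_left_mono)
  have "\<forall>j\<in>F2. (- c j) \<ge> 0" unfolding F2_def by auto
  then have "norm (\<Sum>j\<in>F2. (- c j) *\<^sub>R T (unitvec j)) \<le> C * (\<Sum>j\<in>F2. (- c j) powr p) powr (1 / p)"
    using d[rule_format, of F2 "\<lambda>j. - c j", OF f12(2)] by simp
  also have "(\<Sum>j\<in>F2. (- c j) powr p) = (\<Sum>j\<in>F2. \<bar>c j\<bar> powr p)"
    by (rule sum.cong) (auto simp: F2_def)
  also have "(\<Sum>j\<in>F2. (- c j) *\<^sub>R T (unitvec j)) = - (\<Sum>j\<in>F2. c j *\<^sub>R T (unitvec j))"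
    by (simp add: sum_negf)
  finally have n2: "norm (\<Sum>j\<in>F2. c j *\<^sub>R T (unitvec j)) \<le> C * s"
    using mono[of F2] C un by (smt (verit, best) Un_upper2 mult_left_mono norm_minus_cancel)
  have "(\<Sum>j\<in>F. c j *\<^sub>R T (unitvec j)) = (\<Sum>j\<in>F1. c j *\<^sub>R T (unitvec j)) + (\<Sum>j\<in>F2. c j *\<^sub>R T (unitvec j))"
    using un f12 by (metis sum.union_disjoint)
  then have "norm (\<Sum>j\<in>F. c j *\<^sub>R T (unitvec j)) \<le> C * s + C * s"
    using n1 n2 norm_triangle_ineq by (smt (verit))
  then show ?thesis unfolding s_def by simp
qed

lemma d_imp_a:
  fixes T :: "(nat \<Rightarrow> real) \<Rightarrow> 'e::banach"
  assumes T: "cont_lin_op_on_ell 1 T" and p: "p > 1" and C: "C > 0"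
    and d: "\<forall>F x. finite F \<longrightarrow> (\<forall>j\<in>F. x j \<ge> 0) \<longrightarrow>
                  norm (\<Sum>j\<in>F. x j *\<^sub>R T (unitvec j)) \<le> C * (\<Sum>j\<in>F. x j powr p) powr (1 / p)"
  shows "\<exists>S :: (nat \<Rightarrow> real) \<Rightarrow> 'e. cont_lin_op_on_ell p S \<and> (\<forall>x\<in>ell 1. S x = T x)"
proof -
  note d2 = d_two_sided[OF C p d]
  have summ: "summable (\<lambda>j. y j *\<^sub>R T (unitvec j))" if y: "y \<in> ell p" for y
  proof -
    define g where "g j = \<bar>y j\<bar> powr p" for j
    have sg: "summable g" using y unfolding ell_def g_def by simp
    show ?thesis unfolding summable_Cauchy
    proof (intro allI impI)
      fix e :: real assume e: "e > 0"
      define \<delta> where "\<delta> = (e / (2 * C + 1)) powr p"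
      have dp: "\<delta> > 0" unfolding \<delta>_def using e C by simp
      obtain N where N: "\<forall>m\<ge>N. \<forall>n. norm (sum g {m..<n}) < \<delta>"
        using sg dp unfolding summable_Cauchy by blast
      have "norm (\<Sum>j\<in>{m..<n}. y j *\<^sub>R T (unitvec j)) < e" if m: "m \<ge> N" for m n
      proof -
        define s where "s = sum g {m..<n}"
        have s0: "s \<ge> 0" unfolding s_def g_def by (intro sum_nonneg) simp
        have "norm (sum g {m..<n}) < \<delta>" using N m by blast
        then have "s < \<delta>" using s0 unfolding s_def by simp
        then have "s powr (1 / p) < \<delta> powr (1 / p)" using p s0 by (intro powr_less_mono2) auto
        also have "\<delta> powr (1 / p) = e / (2 * C + 1)"
          unfolding \<delta>_def powr_powr using p e C by simp
        finally have lt: "s powr (1 / p) < e / (2 * C + 1)" .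
        have "norm (\<Sum>j\<in>{m..<n}. y j *\<^sub>R T (unitvec j)) \<le> 2 * C * s powr (1 / p)"
          using d2[of "{m..<n}" y] unfolding s_def g_def by simp
        also have "\<dots> \<le> (2 * C + 1) * s powr (1 / p)"
          by (intro mult_right_mono) auto
        also have "\<dots> < (2 * C + 1) * (e / (2 * C + 1))"
          using lt C by (intro mult_strict_left_mono) auto
        also have "\<dots> = e" using C by simp
        finally show ?thesis .
      qed
      then show "\<exists>N. \<forall>m\<ge>N. \<forall>n. norm (\<Sum>j\<in>{m..<n}. y j *\<^sub>R T (unitvec j)) < e" by blast
    qed
  qed
  define S where "S y = (\<Sum>j. y j *\<^sub>R T (unitvec j))" for y
  have bnd: "norm (S y) \<le> 2 * C * ell_norm p y" if y: "y \<in> ell p" for y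
  proof -
    define g where "g j = \<bar>y j\<bar> powr p" for j
    have sg: "summable g" using y unfolding ell_def g_def by simp
    have "norm (\<Sum>j<n. y j *\<^sub>R T (unitvec j)) \<le> 2 * C * ell_norm p y" for n
    proof -
      have "norm (\<Sum>j<n. y j *\<^sub>R T (unitvec j)) \<le> 2 * C * (\<Sum>j<n. g j) powr (1 / p)"
        using d2[of "{..<n}" y] unfolding g_def by simp
      also have "(\<Sum>j<n. g j) powr (1 / p) \<le> (suminf g) powr (1 / p)"
        using p sum_le_suminf[OF sg, of "{..<n}"]
        by (intro powr_mono2) (auto simp: g_def intro: sum_nonneg)
      then have "2 * C * (\<Sum>j<n. g j) powr (1 / p) \<le> 2 * C * (suminf g) powr (1 / p)"
        using C by simp
      finally show ?thesis unfolding ell_norm_def g_def .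
    qed
    moreover have "(\<lambda>n. norm (\<Sum>j<n. y j *\<^sub>R T (unitvec j))) \<longlonglongrightarrow> norm (S y)"
      unfolding S_def by (intro tendsto_norm summable_LIMSEQ summ y)
    ultimately show ?thesis by (intro LIMSEQ_le_const2[where X="\<lambda>n. norm (\<Sum>j<n. y j *\<^sub>R T (unitvec j))"]) auto
  qed
  have "cont_lin_op_on_ell p S"
    unfolding cont_lin_op_on_ell_def
  proof (intro conjI ballI allI)
    fix x y assume x: "x \<in> ell p" and y: "y \<in> ell p"
    show "S (\<lambda>n. x n + y n) = S x + S y"
      unfolding S_def using suminf_add[OF summ[OF x] summ[OF y]] by (simp add: scaleR_add_left)
  next
    fix c :: real and x assume x: "x \<in> ell p"
    show "S (\<lambda>n. c * x n) = c *\<^sub>R S x"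
      unfolding S_def using suminf_scaleR_right[OF summ[OF x], of c] by simp
  next
    show "\<exists>K. \<forall>x\<in>ell p. norm (S x) \<le> K * ell_norm p x" using bnd by blast
  qed
  moreover have "S x = T x" if "x \<in> ell 1" for x
    unfolding S_def using sums_unique[OF sums_op[OF T _ that]] by simp
  ultimately show ?thesis by blast
qed



lemma step1:
  fixes a :: "nat \<Rightarrow> 'e::real_normed_vector"
  assumes p: "p > 1" and K: "\<And>j. norm (a j) \<le> K" and K0: "K \<ge> 0"
    and nd: "\<And>C. C > 0 \<Longrightarrow> \<exists>F x. finite F \<and> (\<forall>j\<in>F. x j \<ge> 0) \<and>
               C * (\<Sum>j\<in>F. x j powr p) powr (1 / p) < norm (\<Sum>j\<in>F. x j *\<^sub>R a j)"
  shows "\<exists>N' x. N < N' \<and> (\<forall>j. x j \<ge> 0) \<and> (\<Sum>j\<in>{N..<N'}. x j powr p) \<le> (1/2)^k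
              \<and> 2^k \<le> norm (\<Sum>j\<in>{N..<N'}. x j *\<^sub>R a j)"
proof -
  define M :: real where "M = 4^k"
  have M0: "M > 0" unfolding M_def by simp
  have Cpos: "M + K * real N + 1 > 0" using M0 K0 by (smt (verit) mult_nonneg_nonneg of_nat_0_le_iff)
  obtain F x where F: "finite F" and xnn: "\<forall>j\<in>F. x j \<ge> 0"
    and big: "(M + K * real N + 1) * (\<Sum>j\<in>F. x j powr p) powr (1 / p) < norm (\<Sum>j\<in>F. x j *\<^sub>R a j)"
    using nd[OF Cpos] by blast
  define s where "s = (\<Sum>j\<in>F. x j powr p) powr (1 / p)"
  have s0: "s \<ge> 0" unfolding s_def by simp
  define F1 where "F1 = {j\<in>F. j < N}"
  define F2 where "F2 = {j\<in>F. N \<le> j}"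
  have fin: "finite F1" "finite F2" using F unfolding F1_def F2_def by auto
  have un: "F = F1 \<union> F2" "F1 \<inter> F2 = {}" unfolding F1_def F2_def by auto
  have xle: "x j \<le> s" if j: "j \<in> F" for j
  proof -
    have "x j = (x j powr p) powr (1 / p)" using xnn j p by (simp add: powr_powr)
    also have "\<dots> \<le> s" unfolding s_def using p j F
      by (intro powr_mono2 member_le_sum) auto
    finally show ?thesis .
  qed
  have "norm (\<Sum>j\<in>F1. x j *\<^sub>R a j) \<le> (\<Sum>j\<in>F1. norm (x j *\<^sub>R a j))" by (rule norm_sum)
  also have "\<dots> \<le> (\<Sum>j\<in>F1. s * K)"
  proof (rule sum_mono)
    fix j assume j: "j \<in> F1"
    then have "x j \<ge> 0" "x j \<le> s" using xnn xle unfolding F1_def by auto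
    then show "norm (x j *\<^sub>R a j) \<le> s * K" using K[of j] s0 by (simp add: mult_mono)
  qed
  also have "\<dots> = real (card F1) * (s * K)" by simp
  also have "\<dots> \<le> real N * (s * K)"
  proof -
    have "card F1 \<le> card {..<N}" unfolding F1_def by (intro card_mono) auto
    then show ?thesis using s0 K0 by (intro mult_right_mono) auto
  qed
  finally have head: "norm (\<Sum>j\<in>F1. x j *\<^sub>R a j) \<le> K * real N * s" by (simp add: algebra_simps)
  define S2 where "S2 = (\<Sum>j\<in>F2. x j powr p)"
  define s2 where "s2 = S2 powr (1 / p)"
  have S20: "S2 \<ge> 0" unfolding S2_def by (intro sum_nonneg) auto
  have s2le: "s2 \<le> s" unfolding s2_def S2_def s_def using p F un
    by (intro powr_mono2 sum_mono2) (auto intro: sum_nonneg)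
  define u2 where "u2 = (\<Sum>j\<in>F2. x j *\<^sub>R a j)"
  have "(\<Sum>j\<in>F. x j *\<^sub>R a j) = (\<Sum>j\<in>F1. x j *\<^sub>R a j) + u2"
    unfolding u2_def using un fin by (metis sum.union_disjoint)
  then have "norm (\<Sum>j\<in>F. x j *\<^sub>R a j) \<le> norm (\<Sum>j\<in>F1. x j *\<^sub>R a j) + norm u2"
    by (metis norm_triangle_ineq)
  then have u2big: "(M + 1) * s < norm u2" using big head unfolding s_def[symmetric]
    by (simp add: algebra_simps)
  have S2pos: "S2 > 0"
  proof (rule ccontr)
    assume "\<not> S2 > 0"
    then have "S2 = 0" using S20 by simp
    then have "\<forall>j\<in>F2. x j powr p = 0" unfolding S2_def using fin(2)
      by (subst (asm) sum_nonneg_eq_0_iff) auto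
    then have "\<forall>j\<in>F2. x j = 0" by simp
    then have "u2 = 0" unfolding u2_def by simp
    moreover have "(M + 1) * s \<ge> 0" using s0 M0 by simp
    ultimately show False using u2big by simp
  qed
  have s2pos: "s2 > 0" unfolding s2_def using S2pos by simp
  have s2p: "s2 powr p = S2" unfolding s2_def powr_powr using p S20 by simp
  define l where "l = 1 / (2^k * s2)"
  have l0: "l > 0" unfolding l_def using s2pos by simp
  obtain B where B: "F \<subseteq> {..<B}" using finite_nat_bounded[OF F] by blast
  define N' where "N' = max (Suc N) B"
  define x' where "x' j = (if j \<in> F2 then l * x j else 0)" for j
  have sub: "F2 \<subseteq> {N..<N'}" using B unfolding F2_def N'_def by auto
  have x'nn: "\<forall>j. x' j \<ge> 0" unfolding x'_def using xnn l0 F2_def by auto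
  have "(\<Sum>j\<in>{N..<N'}. x' j powr p) = (\<Sum>j\<in>F2. x' j powr p)"
    by (rule sum.mono_neutral_right) (use sub in \<open>auto simp: x'_def\<close>)
  also have "\<dots> = (\<Sum>j\<in>F2. l powr p * x j powr p)"
    by (rule sum.cong) (auto simp: x'_def powr_mult)
  also have "\<dots> = l powr p * S2" unfolding S2_def by (simp add: sum_distrib_left)
  also have "\<dots> = (l * s2) powr p" by (simp add: powr_mult s2p)
  also have "l * s2 = (1/2)^k" unfolding l_def using s2pos by (simp add: power_one_over)
  also have "((1/2::real)^k) powr p \<le> ((1/2)^k) powr 1"
    using p by (intro powr_mono') (auto simp: power_le_one)
  also have "\<dots> = (1/2)^k" by simp
  finally have sp: "(\<Sum>j\<in>{N..<N'}. x' j powr p) \<le> (1/2)^k" .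
  have "(\<Sum>j\<in>{N..<N'}. x' j *\<^sub>R a j) = (\<Sum>j\<in>F2. x' j *\<^sub>R a j)"
    by (rule sum.mono_neutral_right) (use sub in \<open>auto simp: x'_def\<close>)
  also have "\<dots> = l *\<^sub>R u2" unfolding u2_def scaleR_sum_right
    by (rule sum.cong) (auto simp: x'_def)
  finally have eqn: "norm (\<Sum>j\<in>{N..<N'}. x' j *\<^sub>R a j) = l * norm u2" using l0 by simp
  have "(M + 1) * s2 \<le> (M + 1) * s" using s2le M0 by simp
  moreover have "M * s2 \<le> (M + 1) * s2" using s2pos by (simp add: algebra_simps)
  ultimately have "M * s2 < norm u2" using u2big by linarith
  then have "l * (M * s2) < l * norm u2" using l0 by simp
  moreover have "l * (M * s2) = 2^k"
    unfolding l_def M_def using s2pos by (simp add: field_simps power_mult_distrib[symmetric])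
  ultimately have "2^k \<le> norm (\<Sum>j\<in>{N..<N'}. x' j *\<^sub>R a j)" using eqn by simp
  moreover have "N < N'" unfolding N'_def by simp
  ultimately show ?thesis using x'nn sp by blast
qed

lemma H_imp_d:
  fixes T :: "(nat \<Rightarrow> real) \<Rightarrow> 'e::real_normed_vector"
  assumes T: "cont_lin_op_on_ell 1 T" and p: "p > 1"
    and H: "\<And>y (f :: 'e \<Rightarrow> real). y \<in> ell p \<Longrightarrow> bounded_linear f \<Longrightarrow>
              summable (\<lambda>j. \<bar>y j\<bar> * \<bar>f (T (unitvec j))\<bar>)"
  shows "\<exists>C>0. \<forall>F x. finite F \<longrightarrow> (\<forall>j\<in>F. x j \<ge> 0) \<longrightarrow>
                  norm (\<Sum>j\<in>F. x j *\<^sub>R T (unitvec j)) \<le> C * (\<Sum>j\<in>F. x j powr p) powr (1 / p)"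
proof (rule ccontr)
  assume nd0: "\<not> ?thesis"
  define a where "a j = T (unitvec j)" for j
  obtain K0 where K0: "\<forall>x\<in>ell 1. norm (T x) \<le> K0 * ell_norm 1 x"
    using T unfolding cont_lin_op_on_ell_def by blast
  have K: "norm (a j) \<le> K0" for j
  proof -
    have u1: "unitvec j \<in> ell 1" "ell_norm 1 (unitvec j) = 1" using unitvec_ell[of 1 j] by simp_all
    show ?thesis using K0 u1 unfolding a_def by force
  qed
  then have Kn: "K0 \<ge> 0" using norm_ge_zero order_trans by blast
  have nd: "\<exists>F x. finite F \<and> (\<forall>j\<in>F. x j \<ge> 0) \<and>
               C * (\<Sum>j\<in>F. x j powr p) powr (1 / p) < norm (\<Sum>j\<in>F. x j *\<^sub>R a j)"
    if "C > 0" for C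
    using nd0 that unfolding a_def not_le[symmetric] by blast
  define Q where "Q N k q \<longleftrightarrow> N < fst q \<and> (\<forall>j. snd q j \<ge> 0) \<and>
       (\<Sum>j\<in>{N..<fst q}. snd q j powr p) \<le> (1/2)^k \<and>
       2^k \<le> norm (\<Sum>j\<in>{N..<fst q}. snd q j *\<^sub>R a j)" for N k and q :: "nat \<times> (nat \<Rightarrow> real)"
  have exQ: "\<exists>q. Q N k q" for N k
  proof -
    obtain N' x where "N < N' \<and> (\<forall>j. x j \<ge> 0) \<and> (\<Sum>j\<in>{N..<N'}. x j powr p) \<le> (1/2)^k
              \<and> 2^k \<le> norm (\<Sum>j\<in>{N..<N'}. x j *\<^sub>R a j)"
      using step1[OF p K Kn nd] by blast
    then have "Q N k (N', x)" unfolding Q_def by simp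
    then show ?thesis by blast
  qed
  define Nf where "Nf N k = fst (SOME q. Q N k q)" for N k
  define xf where "xf N k = snd (SOME q. Q N k q)" for N k
  have QQ: "Q N k (Nf N k, xf N k)" for N k
    unfolding Nf_def xf_def using someI_ex[OF exQ[of N k]] by simp
  have Nf: "\<And>N k. N < Nf N k" and xfnn: "\<And>N k j. xf N k j \<ge> 0"
    and xfp: "\<And>N k. (\<Sum>j\<in>{N..<Nf N k}. xf N k j powr p) \<le> (1/2)^k"
    and xfn: "\<And>N k. 2^k \<le> norm (\<Sum>j\<in>{N..<Nf N k}. xf N k j *\<^sub>R a j)"
    using QQ unfolding Q_def by auto
  define Ns where "Ns = rec_nat 0 (\<lambda>k n. Nf n k)"
  have Ns0: "Ns 0 = 0" and NsS: "Ns (Suc k) = Nf (Ns k) k" for k unfolding Ns_def by simp_all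
  have NsSuc: "Ns k < Ns (Suc k)" for k using Nf NsS by simp
  have smono: "strict_mono Ns" using NsSuc strict_mono_Suc_iff by blast
  define X where "X k = xf (Ns k) k" for k
  define I where "I k = {Ns k..<Ns (Suc k)}" for k
  have Xnn: "X k j \<ge> 0" for k j unfolding X_def by (rule xfnn)
  have Xp: "(\<Sum>j\<in>I k. X k j powr p) \<le> (1/2)^k" for k unfolding X_def I_def NsS by (rule xfp)
  have Xn: "2^k \<le> norm (\<Sum>j\<in>I k. X k j *\<^sub>R a j)" for k unfolding X_def I_def NsS by (rule xfn)
  have ex: "\<exists>k. j \<in> I k" for j
  proof (induction j)
    case 0
    then show ?case using NsSuc[of 0] Ns0 unfolding I_def by auto
  next
    case (Suc j)
    then obtain k where k: "j \<in> I k" by blast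
    show ?case
    proof (cases "Suc j < Ns (Suc k)")
      case True
      then have "Suc j \<in> I k" using k unfolding I_def by auto
      then show ?thesis by blast
    next
      case False
      then have "Suc j = Ns (Suc k)" using k unfolding I_def by auto
      then have "Suc j \<in> I (Suc k)" using NsSuc[of "Suc k"] unfolding I_def by auto
      then show ?thesis by blast
    qed
  qed
  have uniq: "k = k'" if "j \<in> I k" "j \<in> I k'" for j k k'
  proof (rule ccontr)
    assume "k \<noteq> k'"
    then consider "k < k'" | "k' < k" by linarith
    then show False
    proof cases
      case 1
      then have "Ns (Suc k) \<le> Ns k'" using smono by (simp add: strict_mono_less_eq Suc_leI)
      then show False using that unfolding I_def by auto
    next
      case 2
      then have "Ns (Suc k') \<le> Ns k" using smono by (simp add: strict_mono_less_eq Suc_leI)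
      then show False using that unfolding I_def by auto
    qed
  qed
  define blk where "blk j = (THE k. j \<in> I k)" for j
  have blk: "blk j = k" if "j \<in> I k" for j k
    unfolding blk_def using that uniq by blast
  define y where "y j = X (blk j) j" for j
  have yI: "y j = X k j" if "j \<in> I k" for j k unfolding y_def using blk[OF that] by simp
  have ynn: "y j \<ge> 0" for j unfolding y_def by (rule Xnn)
  have part: "(\<Sum>j<Ns m. g j) = (\<Sum>k<m. \<Sum>j\<in>I k. g j)" for m and g :: "nat \<Rightarrow> real"
  proof (induction m)
    case 0
    then show ?case using Ns0 by simp
  next
    case (Suc m)
    have "{..<Ns (Suc m)} = {..<Ns m} \<union> I m" using NsSuc[of m] unfolding I_def by auto
    moreover have "{..<Ns m} \<inter> I m = {}" unfolding I_def by auto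
    ultimately have "(\<Sum>j<Ns (Suc m). g j) = (\<Sum>j<Ns m. g j) + (\<Sum>j\<in>I m. g j)"
      by (simp add: sum.union_disjoint I_def)
    then show ?case using Suc by simp
  qed
  have yell: "y \<in> ell p"
  proof -
    have "(\<Sum>j\<le>n. \<bar>y j\<bar> powr p) \<le> 2" for n
    proof -
      have "n < Ns (Suc n)" using seq_suble[OF smono, of "Suc n"] by simp
      then have "(\<Sum>j\<le>n. \<bar>y j\<bar> powr p) \<le> (\<Sum>j<Ns (Suc n). \<bar>y j\<bar> powr p)"
        by (intro sum_mono2) auto
      also have "\<dots> = (\<Sum>k<Suc n. \<Sum>j\<in>I k. \<bar>y j\<bar> powr p)" by (rule part)
      also have "\<dots> = (\<Sum>k<Suc n. \<Sum>j\<in>I k. X k j powr p)"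
        by (intro sum.cong refl) (simp add: yI Xnn)
      also have "\<dots> \<le> (\<Sum>k<Suc n. (1/2)^k)" by (intro sum_mono Xp)
      also have "\<dots> \<le> (\<Sum>k. (1/2::real)^k)"
        by (intro sum_le_suminf summable_geometric) auto
      also have "\<dots> = 2" by (subst suminf_geometric) auto
      finally show ?thesis .
    qed
    then have "summable (\<lambda>j. \<bar>y j\<bar> powr p)" by (intro bounded_imp_summable) auto
    then show ?thesis unfolding ell_def by simp
  qed
  define u where "u k = (\<Sum>j\<in>I k. y j *\<^sub>R a j)" for k
  have un: "2^k \<le> norm (u k)" for k
  proof -
    have "u k = (\<Sum>j\<in>I k. X k j *\<^sub>R a j)" unfolding u_def by (intro sum.cong refl) (simp add: yI)
    then show ?thesis using Xn by simp
  qed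
  have "\<exists>c. \<forall>k. \<bar>f (u k)\<bar> \<le> c" if f: "bounded_linear (f :: 'e \<Rightarrow> real)" for f
  proof -
    have sH: "summable (\<lambda>j. \<bar>y j\<bar> * \<bar>f (a j)\<bar>)" using H[OF yell f] unfolding a_def .
    have "\<bar>f (u k)\<bar> \<le> (\<Sum>j. \<bar>y j\<bar> * \<bar>f (a j)\<bar>)" for k
    proof -
      have "f (u k) = (\<Sum>j\<in>I k. y j * f (a j))"
        unfolding u_def by (subst linear_sum[OF bounded_linear.linear[OF f]]) (simp add: linear_scale[OF bounded_linear.linear[OF f]])
      then have "\<bar>f (u k)\<bar> \<le> (\<Sum>j\<in>I k. \<bar>y j\<bar> * \<bar>f (a j)\<bar>)"
        by (simp add: abs_mult[symmetric] sum_abs)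
      also have "\<dots> \<le> (\<Sum>j. \<bar>y j\<bar> * \<bar>f (a j)\<bar>)"
        by (rule sum_le_suminf[OF sH]) (auto simp: I_def)
      finally show ?thesis .
    qed
    then show ?thesis by blast
  qed
  then obtain M where M: "\<And>k. norm (u k) \<le> M" using ubp_vectors[of u] by blast
  obtain k :: nat where "M < real k" using reals_Archimedean2 by blast
  moreover have "real k < 2^k" by (metis of_nat_less_iff less_exp of_nat_numeral of_nat_power)
  ultimately show False using un[of k] M[of k] by linarith
qed



lemma a_imp_b:
  fixes T S :: "(nat \<Rightarrow> real) \<Rightarrow> 'e::real_normed_vector"
  assumes p: "p > 1" and S: "cont_lin_op_on_ell p S" and ext: "\<forall>x\<in>ell 1. S x = T x"
  shows "ell p \<subseteq> {x. ell1_mT T x}"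
proof
  fix y assume y: "y \<in> ell p"
  have Su: "S (unitvec j) = T (unitvec j)" for j using ext unitvec_ell[of 1 j] by simp
  have yA: "(\<lambda>j. if j \<in> A then y j else 0) \<in> ell p" for A
    by (rule ell_dom[OF y]) (use p in auto)
  have sumsA: "(\<lambda>j. if j \<in> A then y j * f (T (unitvec j)) else 0)
      sums f (S (\<lambda>j. if j \<in> A then y j else 0))" if f: "bounded_linear f" for A and f :: "'e \<Rightarrow> real"
  proof -
    have "(\<lambda>j. (if j \<in> A then y j else 0) *\<^sub>R S (unitvec j)) sums S (\<lambda>j. if j \<in> A then y j else 0)"
      by (rule sums_op[OF S _ yA]) (use p in auto)
    then have "(\<lambda>j. f ((if j \<in> A then y j else 0) *\<^sub>R S (unitvec j))) sums f (S (\<lambda>j. if j \<in> A then y j else 0))"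
      by (rule bounded_linear.sums[OF f])
    moreover have "(\<lambda>j. f ((if j \<in> A then y j else 0) *\<^sub>R S (unitvec j)))
        = (\<lambda>j. if j \<in> A then y j * f (T (unitvec j)) else 0)"
      using linear_scale[OF bounded_linear.linear[OF f]] Su by (auto simp: fun_eq_iff)
    ultimately show ?thesis by simp
  qed
  show "y \<in> {x. ell1_mT T x}"
    unfolding mem_Collect_eq ell1_mT_def
  proof (intro conjI allI impI)
    fix f :: "'e \<Rightarrow> real" assume f: "bounded_linear f"
    define g where "g j = y j * f (T (unitvec j))" for j
    have s1: "summable (\<lambda>j. if j \<in> {j. g j \<ge> 0} then g j else 0)"
      using sumsA[OF f, of "{j. g j \<ge> 0}"] unfolding g_def by (auto simp: sums_summable)
    have s2: "summable (\<lambda>j. if j \<in> {j. g j < 0} then g j else 0)"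
      using sumsA[OF f, of "{j. g j < 0}"] unfolding g_def by (auto simp: sums_summable)
    have "(\<lambda>j. \<bar>y j\<bar> * \<bar>f (T (unitvec j))\<bar>)
        = (\<lambda>j. (if j \<in> {j. g j \<ge> 0} then g j else 0) - (if j \<in> {j. g j < 0} then g j else 0))"
      by (auto simp: fun_eq_iff g_def abs_mult[symmetric])
    then show "summable (\<lambda>j. \<bar>y j\<bar> * \<bar>f (T (unitvec j))\<bar>)"
      using summable_diff[OF s1 s2] by simp
  next
    fix A :: "nat set"
    show "\<exists>v. \<forall>f. bounded_linear f \<longrightarrow> f v = (\<Sum>j. if j \<in> A then y j * f (T (unitvec j)) else 0)"
    proof (intro exI allI impI)
      fix f :: "'e \<Rightarrow> real" assume f: "bounded_linear f"
      show "f (S (\<lambda>j. if j \<in> A then y j else 0)) = (\<Sum>j. if j \<in> A then y j * f (T (unitvec j)) else 0)"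
        using sums_unique[OF sumsA[OF f, of A]] by simp
    qed
  qed
qed

lemma b_imp_c:
  fixes T :: "(nat \<Rightarrow> real) \<Rightarrow> 'e::real_normed_vector"
  assumes p: "p > 1" and b: "ell p \<subseteq> {x. ell1_mT T x}"
  shows "ell 1 \<subseteq> {x. ellr_mT (1 / p) T x} \<inter> {x. ell1_mT T x}"
proof
  fix x assume x: "x \<in> ell 1"
  have "x \<in> ell p" using ell1_sub_ellp[OF _ x] p by simp
  then have 1: "ell1_mT T x" using b by auto
  have eq: "\<bar>\<bar>x j\<bar> powr (1 / p)\<bar> powr p = \<bar>x j\<bar>" for j
    using p by (simp add: powr_powr)
  have eq2: "(\<bar>x j\<bar> powr (1 / p)) powr p = \<bar>x j\<bar>" for j
    using p by (simp add: powr_powr)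
  have "(\<lambda>j. \<bar>x j\<bar> powr (1 / p)) \<in> ell p"
    using x unfolding ell_def by (simp add: eq2)
  then have "ell1_mT T (\<lambda>j. \<bar>x j\<bar> powr (1 / p))" using b by auto
  then show "x \<in> {x. ellr_mT (1 / p) T x} \<inter> {x. ell1_mT T x}"
    using 1 unfolding ellr_mT_def by simp
qed

lemma c_imp_H:
  fixes T :: "(nat \<Rightarrow> real) \<Rightarrow> 'e::real_normed_vector"
  assumes p: "p > 1" and c: "ell 1 \<subseteq> {x. ellr_mT (1 / p) T x} \<inter> {x. ell1_mT T x}"
    and y: "y \<in> ell p" and f: "bounded_linear (f :: 'e \<Rightarrow> real)"
  shows "summable (\<lambda>j. \<bar>y j\<bar> * \<bar>f (T (unitvec j))\<bar>)"
proof -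
  define x where "x j = \<bar>y j\<bar> powr p" for j
  have "x \<in> ell 1" using y unfolding ell_def x_def by simp
  then have "ell1_mT T (\<lambda>j. \<bar>x j\<bar> powr (1 / p))" using c unfolding ellr_mT_def by auto
  moreover have "(\<lambda>j. \<bar>x j\<bar> powr (1 / p)) = (\<lambda>j. \<bar>y j\<bar>)"
    unfolding x_def using p by (simp add: powr_powr)
  ultimately have "ell1_mT T (\<lambda>j. \<bar>y j\<bar>)" by simp
  then show ?thesis using f unfolding ell1_mT_def by simp
qed


theorem proposition7p2:
  fixes T :: "(nat \<Rightarrow> real) \<Rightarrow> 'e::banach" and p :: real
  assumes T_cont: "cont_lin_op_on_ell 1 T"
    and T_e: "\<And>n. T (unitvec n) \<noteq> 0"
    and p: "p > 1"
  shows "((\<exists>S :: (nat \<Rightarrow> real) \<Rightarrow> 'e. cont_lin_op_on_ell p S \<and> (\<forall>x\<in>ell 1. S x = T x))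
            \<longleftrightarrow> ell p \<subseteq> {x. ell1_mT T x})
       \<and> (ell p \<subseteq> {x. ell1_mT T x}
            \<longleftrightarrow> ell 1 \<subseteq> {x. ellr_mT (1 / p) T x} \<inter> {x. ell1_mT T x})
       \<and> (ell 1 \<subseteq> {x. ellr_mT (1 / p) T x} \<inter> {x. ell1_mT T x}
            \<longleftrightarrow> (\<exists>C>0. \<forall>F x. finite F \<longrightarrow> (\<forall>j\<in>F. x j \<ge> 0) \<longrightarrow>
                  norm (\<Sum>j\<in>F. x j *\<^sub>R T (unitvec j)) \<le> C * (\<Sum>j\<in>F. x j powr p) powr (1 / p)))"
proof -
  let ?a = "\<exists>S :: (nat \<Rightarrow> real) \<Rightarrow> 'e. cont_lin_op_on_ell p S \<and> (\<forall>x\<in>ell 1. S x = T x)"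
  let ?b = "ell p \<subseteq> {x. ell1_mT T x}"
  let ?c = "ell 1 \<subseteq> {x. ellr_mT (1 / p) T x} \<inter> {x. ell1_mT T x}"
  let ?d = "\<exists>C>0. \<forall>F x. finite F \<longrightarrow> (\<forall>j\<in>F. x j \<ge> 0) \<longrightarrow>
                  norm (\<Sum>j\<in>F. x j *\<^sub>R T (unitvec j)) \<le> C * (\<Sum>j\<in>F. x j powr p) powr (1 / p)"
  have ab: "?a \<Longrightarrow> ?b" using a_imp_b[OF p] by blast
  have bc: "?b \<Longrightarrow> ?c" using b_imp_c[OF p] by blast
  have cd: "?c \<Longrightarrow> ?d"
  proof -
    assume c: ?c
    show ?d by (rule H_imp_d[OF T_cont p c_imp_H[OF p c]])
  qed
  have da: "?d \<Longrightarrow> ?a"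
  proof -
    assume ?d
    then obtain C where C: "C > 0" and d: "\<forall>F x. finite F \<longrightarrow> (\<forall>j\<in>F. x j \<ge> 0) \<longrightarrow>
                  norm (\<Sum>j\<in>F. x j *\<^sub>R T (unitvec j)) \<le> C * (\<Sum>j\<in>F. x j powr p) powr (1 / p)"
      by blast
    show ?a by (rule d_imp_a[OF T_cont p C d])
  qed
  show ?thesis using ab bc cd da by blast
qed

end
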